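(* Let $M=(\mathbf{K}^{\mathbf{n}},\rho)$ be a sum-matroid of rank $k=\rho(\mathbf{K}^{\mathbf{n}})$, let $n=n_1+\cdots+n_\ell$, and let $d_i=d^S_i(M)$ for $i=1,\dots,\eta(\mathbf{K}^{\mathbf{n}})=n-k$ be its generalized weights. Then $d_1<d_2<\cdots<d_{n-k}$.
   Context: $\ell,n_1,\dots,n_\ell$ positive integers, $K_1,\dots,K_\ell$ finite fields. $\mathcal{P}(\mathbf{K}^{\mathbf{n}})=\mathcal{P}(K_1^{n_1})\times\cdots\times\mathcal{P}(K_\ell^{n_\ell})$, $\mathcal{P}(K_i^{n_i})$ the lattice of $K_i$-subspaces of $K_i^{n_i}$, with componentwise inclusion, sum and intersection; $\mathrm{Rk}(\mathcal{L})=\sum_i\dim_{K_i}\mathcal{L}_i$; $\mathbf{K}^{\mathbf{n}}=(K_1^{n_1},\dots,K_\ell^{n_\ell})$. A sum-matroid is $(\mathbf{K}^{\mathbf{n}},\rho)$ with $\rho:\mathcal{P}(\mathbf{K}^{\mathbf{n}})\to\mathbb{Z}_{\ge0}$ satisfying (R1) $0\le\rho(\mathcal{L})\le\mathrm{Rk}(\mathcal{L})$; (R2) $\mathcal{L}\subseteq\mathcal{L}'\Rightarrow\rho(\mathcal{L})\le\rho(\mathcal{L}')$; (R3) $\rho(\mathcal{L}+\mathcal{L}')+\rho(\mathcal{L}\cap\mathcal{L}')\le\rho(\mathcal{L})+\rho(\mathcal{L}')$. Nullity: $\eta(\mathcal{L})=\mathrm{Rk}(\mathcal{L})-\rho(\mathcal{L})$.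 Generalized weights: $d^S_i(M)=\min\{\mathrm{Rk}(\mathcal{L}):\eta(\mathcal{L})=i\}$ for $i=1,\dots,\eta(\mathbf{K}^{\mathbf{n}})$. *)

theory Defs
  imports "HOL-Algebra.Ring" "HOL-Algebra.Ring_Divisibility"
begin

text \<open>Sum-matroids over finite fields K_1,...,K_l (indexed 0..l-1).
  All fields live in a common element type 'a, given as HOL-Algebra rings K i.
  A vector of K_i^{n_i} is a function nat => 'a with entries in carrier (K i) at
  positions < n_i and zero elsewhere.\<close>

definition vecs :: "('a, 'b) ring_scheme \<Rightarrow> nat \<Rightarrow> (nat \<Rightarrow> 'a) set" where
  "vecs F m = {v. (\<forall>j<m. v j \<in> carrier F) \<and> (\<forall>j\<ge>m. v j = \<zero>\<^bsub>F\<^esub>)}"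

definition vadd :: "('a, 'b) ring_scheme \<Rightarrow> (nat \<Rightarrow> 'a) \<Rightarrow> (nat \<Rightarrow> 'a) \<Rightarrow> (nat \<Rightarrow> 'a)" where
  "vadd F v w = (\<lambda>j. v j \<oplus>\<^bsub>F\<^esub> w j)"

definition vsmult :: "('a, 'b) ring_scheme \<Rightarrow> 'a \<Rightarrow> (nat \<Rightarrow> 'a) \<Rightarrow> (nat \<Rightarrow> 'a)" where
  "vsmult F c v = (\<lambda>j. c \<otimes>\<^bsub>F\<^esub> v j)"

definition vzero :: "('a, 'b) ring_scheme \<Rightarrow> nat \<Rightarrow> 'a" where
  "vzero F = (\<lambda>j. \<zero>\<^bsub>F\<^esub>)"

definition is_subspace :: "('a, 'b) ring_scheme \<Rightarrow> nat \<Rightarrow> (nat \<Rightarrow> 'a) set \<Rightarrow> bool" where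
  "is_subspace F m W \<longleftrightarrow> W \<subseteq> vecs F m \<and> vzero F \<in> W
     \<and> (\<forall>v\<in>W. \<forall>w\<in>W. vadd F v w \<in> W)
     \<and> (\<forall>c\<in>carrier F. \<forall>v\<in>W. vsmult F c v \<in> W)"

definition vspan :: "('a, 'b) ring_scheme \<Rightarrow> nat \<Rightarrow> (nat \<Rightarrow> 'a) set \<Rightarrow> (nat \<Rightarrow> 'a) set" where
  "vspan F m S = \<Inter>{W. is_subspace F m W \<and> S \<subseteq> W}"

definition vdim :: "('a, 'b) ring_scheme \<Rightarrow> nat \<Rightarrow> (nat \<Rightarrow> 'a) set \<Rightarrow> nat" where
  "vdim F m W = (LEAST d. \<exists>S. finite S \<and> card S = d \<and> S \<subseteq> W \<and> vspan F m S = W)"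

definition lat :: "nat \<Rightarrow> (nat \<Rightarrow> ('a, 'b) ring_scheme) \<Rightarrow> (nat \<Rightarrow> nat)
    \<Rightarrow> (nat \<Rightarrow> (nat \<Rightarrow> 'a) set) set" where
  "lat l K n = {L. (\<forall>i<l. is_subspace (K i) (n i) (L i)) \<and> (\<forall>i\<ge>l. L i = {})}"

definition lat_top :: "nat \<Rightarrow> (nat \<Rightarrow> ('a, 'b) ring_scheme) \<Rightarrow> (nat \<Rightarrow> nat)
    \<Rightarrow> nat \<Rightarrow> (nat \<Rightarrow> 'a) set" where
  "lat_top l K n = (\<lambda>i. if i < l then vecs (K i) (n i) else {})"

definition lat_sum :: "nat \<Rightarrow> (nat \<Rightarrow> ('a, 'b) ring_scheme)
    \<Rightarrow> (nat \<Rightarrow> (nat \<Rightarrow> 'a) set) \<Rightarrow> (nat \<Rightarrow> (nat \<Rightarrow> 'a) set) \<Rightarrow> nat \<Rightarrow> (nat \<Rightarrow> 'a) set" where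
  "lat_sum l K L L' = (\<lambda>i. if i < l then {vadd (K i) v w | v w. v \<in> L i \<and> w \<in> L' i} else {})"

definition lat_inter :: "(nat \<Rightarrow> (nat \<Rightarrow> 'a) set) \<Rightarrow> (nat \<Rightarrow> (nat \<Rightarrow> 'a) set) \<Rightarrow> nat \<Rightarrow> (nat \<Rightarrow> 'a) set" where
  "lat_inter L L' = (\<lambda>i. L i \<inter> L' i)"

definition lat_le :: "(nat \<Rightarrow> (nat \<Rightarrow> 'a) set) \<Rightarrow> (nat \<Rightarrow> (nat \<Rightarrow> 'a) set) \<Rightarrow> bool" where
  "lat_le L L' \<longleftrightarrow> (\<forall>i. L i \<subseteq> L' i)"

definition Rk :: "nat \<Rightarrow> (nat \<Rightarrow> ('a, 'b) ring_scheme) \<Rightarrow> (nat \<Rightarrow> nat)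
    \<Rightarrow> (nat \<Rightarrow> (nat \<Rightarrow> 'a) set) \<Rightarrow> nat" where
  "Rk l K n L = (\<Sum>i<l. vdim (K i) (n i) (L i))"

definition sum_matroid :: "nat \<Rightarrow> (nat \<Rightarrow> ('a, 'b) ring_scheme) \<Rightarrow> (nat \<Rightarrow> nat)
    \<Rightarrow> ((nat \<Rightarrow> (nat \<Rightarrow> 'a) set) \<Rightarrow> nat) \<Rightarrow> bool" where
  "sum_matroid l K n \<rho> \<longleftrightarrow>
     (\<forall>L\<in>lat l K n. \<rho> L \<le> Rk l K n L)
   \<and> (\<forall>L\<in>lat l K n. \<forall>L'\<in>lat l K n. lat_le L L' \<longrightarrow> \<rho> L \<le> \<rho> L')
   \<and> (\<forall>L\<in>lat l K n. \<forall>L'\<in>lat l K n.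
        \<rho> (lat_sum l K L L') + \<rho> (lat_inter L L') \<le> \<rho> L + \<rho> L')"

definition nullity :: "nat \<Rightarrow> (nat \<Rightarrow> ('a, 'b) ring_scheme) \<Rightarrow> (nat \<Rightarrow> nat)
    \<Rightarrow> ((nat \<Rightarrow> (nat \<Rightarrow> 'a) set) \<Rightarrow> nat) \<Rightarrow> (nat \<Rightarrow> (nat \<Rightarrow> 'a) set) \<Rightarrow> nat" where
  "nullity l K n \<rho> L = Rk l K n L - \<rho> L"

definition gen_weight :: "nat \<Rightarrow> (nat \<Rightarrow> ('a, 'b) ring_scheme) \<Rightarrow> (nat \<Rightarrow> nat)
    \<Rightarrow> ((nat \<Rightarrow> (nat \<Rightarrow> 'a) set) \<Rightarrow> nat) \<Rightarrow> nat \<Rightarrow> nat" where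
  "gen_weight l K n \<rho> i =
     (LEAST r. \<exists>L\<in>lat l K n. nullity l K n \<rho> L = i \<and> Rk l K n L = r)"

end

theory Submission
  imports Defs
begin

lemma vecs_subspace:
  assumes "ring F" shows "is_subspace F m (vecs F m)"
proof -
  interpret ring F by fact
  show ?thesis
    unfolding is_subspace_def vecs_def vzero_def vadd_def vsmult_def by auto
qed

lemma vecs_finite:
  assumes "finite (carrier F)" shows "finite (vecs F m)"
proof (rule inj_on_finite[where f="\<lambda>v. map v [0..<m]"])
  show "inj_on (\<lambda>v. map v [0..<m]) (vecs F m)"
  proof (rule inj_onI)
    fix v w assume v: "v \<in> vecs F m" and w: "w \<in> vecs F m" and e: "map v [0..<m] = map w [0..<m]"
    show "v = w"
    proof
      fix j show "v j = w j"
      proof (cases "j < m")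
        case True
        then show ?thesis using arg_cong[OF e, of "\<lambda>xs. xs ! j"] by simp
      next
        case False
        then show ?thesis using v w by (simp add: vecs_def)
      qed
    qed
  qed
  show "(\<lambda>v. map v [0..<m]) ` vecs F m \<subseteq> {xs. set xs \<subseteq> carrier F \<and> length xs = m}"
    by (auto simp: vecs_def)
  show "finite {xs. set xs \<subseteq> carrier F \<and> length xs = m}"
    using assms by (rule finite_lists_length_eq)
qed

lemma vspan_sub: "is_subspace F m W \<Longrightarrow> S \<subseteq> W \<Longrightarrow> vspan F m S \<subseteq> W"
  unfolding vspan_def by auto

lemma vspan_super: "S \<subseteq> vspan F m S"
  unfolding vspan_def by auto

lemma vspan_subspace:
  assumes "ring F" "S \<subseteq> vecs F m" shows "is_subspace F m (vspan F m S)"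
proof -
  have V: "is_subspace F m (vecs F m)" using vecs_subspace[OF assms(1)] .
  let ?A = "{W. is_subspace F m W \<and> S \<subseteq> W}"
  have ne: "vecs F m \<in> ?A" using V assms(2) by auto
  have "is_subspace F m (\<Inter> ?A)" unfolding is_subspace_def[of F m "\<Inter> ?A"]
  proof (intro conjI)
    show "\<Inter> ?A \<subseteq> vecs F m" using ne by auto
    show "vzero F \<in> \<Inter> ?A"
    proof
      fix X assume "X \<in> ?A" thus "vzero F \<in> X" unfolding is_subspace_def by blast
    qed
    show "\<forall>v\<in>\<Inter> ?A. \<forall>w\<in>\<Inter> ?A. vadd F v w \<in> \<Inter> ?A"
    proof (intro ballI)
      fix v w assume v: "v \<in> \<Inter> ?A" and w: "w \<in> \<Inter> ?A"
      show "vadd F v w \<in> \<Inter> ?A"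
      proof
        fix X assume X: "X \<in> ?A"
        hence "v \<in> X" "w \<in> X" using v w by blast+
        thus "vadd F v w \<in> X" using X unfolding is_subspace_def by blast
      qed
    qed
    show "\<forall>c\<in>carrier F. \<forall>v\<in>\<Inter> ?A. vsmult F c v \<in> \<Inter> ?A"
    proof (intro ballI)
      fix c v assume c: "c \<in> carrier F" and v: "v \<in> \<Inter> ?A"
      show "vsmult F c v \<in> \<Inter> ?A"
      proof
        fix X assume X: "X \<in> ?A"
        hence "v \<in> X" using v by blast
        thus "vsmult F c v \<in> X" using X c unfolding is_subspace_def by blast
      qed
    qed
  qed
  thus ?thesis unfolding vspan_def .
qed

lemma vspan_idem: "is_subspace F m W \<Longrightarrow> vspan F m W = W"
  using vspan_sub vspan_super by (metis order_refl subset_antisym)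

lemma vdim_le:
  assumes "finite S" "S \<subseteq> W" "vspan F m S = W"
  shows "vdim F m W \<le> card S"
  unfolding vdim_def by (rule Least_le) (use assms in blast)

lemma vdim_ex:
  assumes "finite S" "S \<subseteq> W" "vspan F m S = W"
  shows "\<exists>T. finite T \<and> card T = vdim F m W \<and> T \<subseteq> W \<and> vspan F m T = W"
  unfolding vdim_def by (rule LeastI_ex) (use assms in blast)

lemma dim_drop:
  assumes R: "ring F" and W: "is_subspace F m W" and fin: "finite W" and pos: "vdim F m W > 0"
  shows "\<exists>W1. is_subspace F m W1 \<and> W1 \<subseteq> W \<and> vdim F m W1 + 1 = vdim F m W"
proof -
  obtain S where S: "finite S" "card S = vdim F m W" "S \<subseteq> W" "vspan F m S = W"
    using vdim_ex[OF fin order_refl vspan_idem[OF W]] by blast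
  have Wv: "W \<subseteq> vecs F m" using W by (simp add: is_subspace_def)
  have "S \<noteq> {}" using S(2) pos by auto
  then obtain s where s: "s \<in> S" by blast
  define W1 where "W1 = vspan F m (S - {s})"
  have W1s: "is_subspace F m W1" unfolding W1_def
    by (rule vspan_subspace[OF R]) (use S Wv in auto)
  have W1W: "W1 \<subseteq> W" unfolding W1_def by (rule vspan_sub[OF W]) (use S in auto)
  have SW1: "S - {s} \<subseteq> W1" unfolding W1_def by (rule vspan_super)
  have le1: "vdim F m W1 \<le> card (S - {s})"
  proof (rule vdim_le)
    show "finite (S - {s})" using S by simp
    show "S - {s} \<subseteq> W1" by (rule SW1)
    show "vspan F m (S - {s}) = W1" unfolding W1_def ..
  qed
  have "\<exists>T. finite T \<and> card T = vdim F m W1 \<and> T \<subseteq> W1 \<and> vspan F m T = W1"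
    by (rule vdim_ex[of "S - {s}"]) (use S SW1 W1_def in auto)
  then obtain T where T: "finite T" "card T = vdim F m W1" "T \<subseteq> W1" "vspan F m T = W1"
    by blast
  have TsW: "insert s T \<subseteq> W" using T(3) W1W s S(3) by blast
  have sp: "is_subspace F m (vspan F m (insert s T))"
    by (rule vspan_subspace[OF R]) (use TsW Wv in blast)
  have Tsub: "T \<subseteq> vspan F m (insert s T)"
    using vspan_super[of "insert s T" F m] by blast
  have "W1 \<subseteq> vspan F m (insert s T)"
    using vspan_sub[OF sp Tsub] T(4) by simp
  moreover have "s \<in> vspan F m (insert s T)"
    using vspan_super[of "insert s T" F m] by blast
  ultimately have "S \<subseteq> vspan F m (insert s T)"
    using SW1 by blast
  hence "W \<subseteq> vspan F m (insert s T)" using vspan_sub[OF sp] S(4) by metis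
  moreover have "vspan F m (insert s T) \<subseteq> W" using vspan_sub[OF W TsW] .
  ultimately have eq: "vspan F m (insert s T) = W" by (rule subset_antisym[rotated])
  have "vdim F m W \<le> card (insert s T)"
    by (rule vdim_le[OF _ TsW eq]) (use T(1) in simp)
  also have "\<dots> \<le> vdim F m W1 + 1" using T(1,2) by (simp add: card_insert_if)
  finally have "vdim F m W \<le> vdim F m W1 + 1" .
  moreover have "card (S - {s}) = vdim F m W - 1" using S s by simp
  ultimately show ?thesis using W1s W1W le1 pos by (intro exI[of _ W1]) auto
qed

lemma lat_step:
  assumes ring: "\<And>i. i < l \<Longrightarrow> ring (K i)"
    and fin: "\<And>i. i < l \<Longrightarrow> finite (carrier (K i))"
    and L: "L \<in> lat l K n" and pos: "Rk l K n L > 0"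
  shows "\<exists>L1\<in>lat l K n. lat_le L1 L \<and> Rk l K n L1 + 1 = Rk l K n L"
proof -
  have "\<exists>i<l. vdim (K i) (n i) (L i) > 0"
  proof (rule ccontr)
    assume "\<not> ?thesis"
    hence "\<forall>i\<in>{..<l}. vdim (K i) (n i) (L i) = 0" by auto
    hence "Rk l K n L = 0" unfolding Rk_def by (rule sum.neutral)
    thus False using pos by simp
  qed
  then obtain i0 where i0: "i0 < l" "vdim (K i0) (n i0) (L i0) > 0" by blast
  have sub: "is_subspace (K i0) (n i0) (L i0)" using L i0(1) by (simp add: lat_def)
  have "finite (L i0)"
    using sub vecs_finite[OF fin[OF i0(1)], of "n i0"] unfolding is_subspace_def
    by (meson finite_subset)
  from dim_drop[OF ring[OF i0(1)] sub this i0(2)] obtain W1 where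
    W1: "is_subspace (K i0) (n i0) W1" "W1 \<subseteq> L i0"
        "vdim (K i0) (n i0) W1 + 1 = vdim (K i0) (n i0) (L i0)" by blast
  define L1 where "L1 = L(i0 := W1)"
  have L1lat: "L1 \<in> lat l K n"
    using L W1(1) i0(1) unfolding lat_def L1_def by auto
  have le: "lat_le L1 L" using W1(2) unfolding lat_le_def L1_def by auto
  have fl: "finite {..<l}" by simp
  have i0l: "i0 \<in> {..<l}" using i0 by simp
  have "Rk l K n L = vdim (K i0) (n i0) (L i0) + (\<Sum>i\<in>{..<l} - {i0}. vdim (K i) (n i) (L i))"
    unfolding Rk_def by (rule sum.remove[OF fl i0l])
  moreover have "Rk l K n L1 = vdim (K i0) (n i0) (L1 i0) + (\<Sum>i\<in>{..<l} - {i0}. vdim (K i) (n i) (L1 i))"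
    unfolding Rk_def by (rule sum.remove[OF fl i0l])
  moreover have "(\<Sum>i\<in>{..<l} - {i0}. vdim (K i) (n i) (L1 i)) = (\<Sum>i\<in>{..<l} - {i0}. vdim (K i) (n i) (L i))"
    by (rule sum.cong) (auto simp: L1_def)
  ultimately have "Rk l K n L1 + 1 = Rk l K n L" using W1(3) by (simp add: L1_def)
  thus ?thesis using L1lat le by blast
qed

lemma descent:
  assumes ring: "\<And>i. i < l \<Longrightarrow> ring (K i)"
    and fin: "\<And>i. i < l \<Longrightarrow> finite (carrier (K i))"
    and M: "sum_matroid l K n \<rho>"
  shows "L \<in> lat l K n \<Longrightarrow> j < nullity l K n \<rho> L \<Longrightarrow>
     \<exists>L'\<in>lat l K n. nullity l K n \<rho> L' = j \<and> Rk l K n L' < Rk l K n L"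
proof (induction "Rk l K n L" arbitrary: L rule: less_induct)
  case less
  have R1: "\<And>L. L \<in> lat l K n \<Longrightarrow> \<rho> L \<le> Rk l K n L"
    using M unfolding sum_matroid_def by blast
  have R2: "\<And>L L'. L \<in> lat l K n \<Longrightarrow> L' \<in> lat l K n \<Longrightarrow> lat_le L L' \<Longrightarrow> \<rho> L \<le> \<rho> L'"
    using M unfolding sum_matroid_def by blast
  have "Rk l K n L > 0" using less.prems unfolding nullity_def by simp
  from lat_step[OF ring fin less.prems(1) this] obtain L1 where
    L1: "L1 \<in> lat l K n" "lat_le L1 L" "Rk l K n L1 + 1 = Rk l K n L" by blast
  have "\<rho> L1 \<le> \<rho> L" using R2[OF L1(1) less.prems(1) L1(2)] .
  moreover have "\<rho> L1 \<le> Rk l K n L1" using R1[OF L1(1)] .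
  moreover have "\<rho> L \<le> Rk l K n L" using R1[OF less.prems(1)] .
  ultimately have ge: "nullity l K n \<rho> L1 \<ge> j" using less.prems(2) L1(3) unfolding nullity_def by linarith
  show ?case
  proof (cases "nullity l K n \<rho> L1 = j")
    case True
    then show ?thesis using L1 by (intro bexI[of _ L1]) auto
  next
    case False
    hence "j < nullity l K n \<rho> L1" using ge by simp
    from less.hyps[OF _ L1(1) this] L1(3) show ?thesis by fastforce
  qed
qed

theorem mainTheorem9:
  fixes l :: nat and K :: "nat \<Rightarrow> ('a, 'b) ring_scheme" and n :: "nat \<Rightarrow> nat"
    and \<rho> :: "(nat \<Rightarrow> (nat \<Rightarrow> 'a) set) \<Rightarrow> nat"
  assumes "l \<ge> 1"
    and "\<And>i. i < l \<Longrightarrow> n i \<ge> 1"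
    and "\<And>i. i < l \<Longrightarrow> field (K i)"
    and "\<And>i. i < l \<Longrightarrow> finite (carrier (K i))"
    and "sum_matroid l K n \<rho>"
  shows "\<forall>i. 1 \<le> i \<and> i < nullity l K n \<rho> (lat_top l K n) \<longrightarrow>
           gen_weight l K n \<rho> i < gen_weight l K n \<rho> (i + 1)"
proof (intro allI impI)
  fix i assume i: "1 \<le> i \<and> i < nullity l K n \<rho> (lat_top l K n)"
  have ring: "\<And>i. i < l \<Longrightarrow> ring (K i)" using assms(3) field.is_ring by blast
  have top: "lat_top l K n \<in> lat l K n"
    unfolding lat_def lat_top_def using vecs_subspace[OF ring] by auto
  have "\<exists>L\<in>lat l K n. nullity l K n \<rho> L = i + 1"
  proof (cases "i + 1 = nullity l K n \<rho> (lat_top l K n)")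
    case True then show ?thesis using top by metis
  next
    case False
    hence "i + 1 < nullity l K n \<rho> (lat_top l K n)" using i by simp
    from descent[OF ring assms(4) assms(5) top this] show ?thesis by blast
  qed
  hence "\<exists>r. \<exists>L\<in>lat l K n. nullity l K n \<rho> L = i + 1 \<and> Rk l K n L = r" by blast
  hence "\<exists>L\<in>lat l K n. nullity l K n \<rho> L = i + 1 \<and> Rk l K n L = gen_weight l K n \<rho> (i + 1)"
    unfolding gen_weight_def by (rule LeastI_ex)
  then obtain L where L: "L \<in> lat l K n" "nullity l K n \<rho> L = i + 1"
    "Rk l K n L = gen_weight l K n \<rho> (i + 1)" by blast
  from descent[OF ring assms(4) assms(5) L(1), of i] L(2) obtain L' where
    L': "L' \<in> lat l K n" "nullity l K n \<rho> L' = i" "Rk l K n L' < Rk l K n L" by auto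
  have "gen_weight l K n \<rho> i \<le> Rk l K n L'"
    unfolding gen_weight_def by (rule Least_le) (use L' in blast)
  thus "gen_weight l K n \<rho> i < gen_weight l K n \<rho> (i + 1)" using L'(3) L(3) by simp
qed

end
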